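(* Let $G$ be a graph with weight function $w:V(G)\to[0,1]$, and let $S$ be an even set in $G$. Let $f:2^S\to\mathbb{R}$ be given by $f(A)=-\alpha_{A,S}(G)$ for $A\subseteq S$. Then $f$ is submodular, i.e. $f(A)+f(B)\ge f(A\cup B)+f(A\cap B)$ for all $A,B\subseteq S$.
   Context: All graphs are finite and simple. Paths are induced paths; length is the number of edges; a path is even if its length is even. An even pair in $G$ is a pair $\{x,y\}$ of vertices such that every induced path in $G$ from $x$ to $y$ is even (in particular $x,y$ are non-adjacent). An even set is a set of vertices every two of which form an even pair (so even sets are independent). For $X\subseteq V(G)$, $w(X)=\sum_{x\in X}w(x)$. For an independent set $S$ and $A\subseteq S$, $\alpha_{A,S}(G)$ denotes the maximum of $w(I)$ over independent sets $I$ of $G$ with $I\cap S=A$. *)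

theory Defs
  imports Complex_Main
begin

definition simple_graph :: "'a set \<Rightarrow> ('a \<Rightarrow> 'a \<Rightarrow> bool) \<Rightarrow> bool" where
  "simple_graph V E \<longleftrightarrow> finite V \<and> (\<forall>x y. E x y \<longrightarrow> x \<in> V \<and> y \<in> V)
     \<and> (\<forall>x y. E x y \<longrightarrow> E y x) \<and> (\<forall>x. \<not> E x x)"

text \<open>Induced path given as the list of its vertices; its length is length p - 1.\<close>
definition induced_path :: "'a set \<Rightarrow> ('a \<Rightarrow> 'a \<Rightarrow> bool) \<Rightarrow> 'a list \<Rightarrow> bool" where
  "induced_path V E p \<longleftrightarrow> p \<noteq> [] \<and> set p \<subseteq> V \<and> distinct p
     \<and> (\<forall>i. Suc i < length p \<longrightarrow> E (p ! i) (p ! Suc i))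
     \<and> (\<forall>i j. i < length p \<and> j < length p \<and> Suc i < j \<longrightarrow> \<not> E (p ! i) (p ! j))"

definition even_pair :: "'a set \<Rightarrow> ('a \<Rightarrow> 'a \<Rightarrow> bool) \<Rightarrow> 'a \<Rightarrow> 'a \<Rightarrow> bool" where
  "even_pair V E x y \<longleftrightarrow> x \<in> V \<and> y \<in> V \<and> x \<noteq> y \<and>
     (\<forall>p. induced_path V E p \<and> hd p = x \<and> last p = y \<longrightarrow> even (length p - 1))"

definition even_set :: "'a set \<Rightarrow> ('a \<Rightarrow> 'a \<Rightarrow> bool) \<Rightarrow> 'a set \<Rightarrow> bool" where
  "even_set V E S \<longleftrightarrow> S \<subseteq> V \<and> (\<forall>x\<in>S. \<forall>y\<in>S. x \<noteq> y \<longrightarrow> even_pair V E x y)"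

definition independent :: "'a set \<Rightarrow> ('a \<Rightarrow> 'a \<Rightarrow> bool) \<Rightarrow> 'a set \<Rightarrow> bool" where
  "independent V E I \<longleftrightarrow> I \<subseteq> V \<and> (\<forall>x\<in>I. \<forall>y\<in>I. \<not> E x y)"

definition alpha_AS :: "'a set \<Rightarrow> ('a \<Rightarrow> 'a \<Rightarrow> bool) \<Rightarrow> ('a \<Rightarrow> real) \<Rightarrow> 'a set \<Rightarrow> 'a set \<Rightarrow> real" where
  "alpha_AS V E w A S = Max {sum w I | I. independent V E I \<and> I \<inter> S = A}"

end

theory Submission
  imports Defs
begin

definition walk :: "'a set \<Rightarrow> ('a \<Rightarrow> 'a \<Rightarrow> bool) \<Rightarrow> 'a list \<Rightarrow> bool" where
  "walk D E p \<longleftrightarrow> p \<noteq> [] \<and> set p \<subseteq> D \<and> (\<forall>i. Suc i < length p \<longrightarrow> E (p ! i) (p ! Suc i))"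

lemma walk_step:
  assumes "walk D E p" "q!k = p!m" "q!Suc k = p!Suc m" "Suc m < length p"
  shows "E (q!k) (q!Suc k)"
proof -
  have "\<forall>i. Suc i < length p \<longrightarrow> E (p ! i) (p ! Suc i)" using assms(1) unfolding walk_def by blast
  then have "E (p!m) (p!Suc m)" using assms(4) by blast
  then show ?thesis using assms(2,3) by (simp only:)
qed

lemma walk_cut:
  assumes "walk D E p" "Suc i < j" "j < length p" "E (p!i) (p!j)"
  shows "walk D E (take (Suc i) p @ drop j p) \<and> hd (take (Suc i) p @ drop j p) = hd p
     \<and> last (take (Suc i) p @ drop j p) = last p \<and> length (take (Suc i) p @ drop j p) < length p"
proof -
  let ?q = "take (Suc i) p @ drop j p"
  have len: "length ?q = Suc i + (length p - j)" using assms by auto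
  have "E (?q!k) (?q!Suc k)" if "Suc k < length ?q" for k
  proof (cases "k < i")
    case True
    have lt: "length (take (Suc i) p) = Suc i" using assms by simp
    have "?q!k = p!k" using True lt by (simp add: nth_append)
    moreover have "?q!Suc k = p!Suc k" using True lt by (simp add: nth_append)
    moreover have "Suc k < length p" using True assms by linarith
    ultimately show ?thesis by (rule walk_step[OF assms(1)])
  next
    case False
    show ?thesis
    proof (cases "k = i")
      case True
      have lt: "length (take (Suc i) p) = Suc i" using assms by simp
      have "?q!k = p!i" using True lt by (simp add: nth_append)
      moreover have "?q!Suc k = p!j" using True lt assms by (simp add: nth_append)
      ultimately show ?thesis using assms(4) by simp
    next
      case False
      then have "k > i" using \<open>\<not> k < i\<close> by simp
      have kl: "Suc (k - Suc i) < length p - j" using that len \<open>k > i\<close> by simp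
      have lt: "length (take (Suc i) p) = Suc i" using assms by simp
      have jl: "j \<le> length p" using assms by simp
      have nk: "\<not> k < Suc i" "\<not> Suc k < Suc i" using \<open>k > i\<close> by simp_all
      have a: "?q!k = p!(j + (k - Suc i))"
        using lt jl nk by (simp only: nth_append nth_drop if_False)
      have a2: "?q!Suc k = p!(j + (Suc k - Suc i))"
        using lt jl nk by (simp only: nth_append nth_drop if_False)
      have b: "j + (Suc k - Suc i) = Suc (j + (k - Suc i))" using \<open>k > i\<close> by simp
      have "?q!k = p!(j + (k - Suc i))" "?q!Suc k = p!Suc (j + (k - Suc i))"
        using a a2 b by (simp only:)+
      moreover have "Suc (j + (k - Suc i)) < length p" using kl by linarith
      ultimately show ?thesis by (rule walk_step[OF assms(1)])
    qed
  qed
  moreover have "set ?q \<subseteq> set p" by (auto dest: in_set_takeD in_set_dropD)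
  moreover have "?q \<noteq> []" using assms(3) by (cases p) auto
  ultimately have "walk D E ?q" using assms(1) unfolding walk_def by blast
  moreover have "hd ?q = hd p" using assms by (simp add: hd_append)
  moreover have "last ?q = last p" using assms by simp
  moreover have "length ?q < length p" using assms len by simp
  ultimately show ?thesis by blast
qed

lemma walk_cut_eq:
  assumes "walk D E p" "i < j" "j < length p" "p!i = p!j"
  shows "walk D E (take (Suc i) p @ drop (Suc j) p) \<and> hd (take (Suc i) p @ drop (Suc j) p) = hd p
     \<and> last (take (Suc i) p @ drop (Suc j) p) = last p \<and> length (take (Suc i) p @ drop (Suc j) p) < length p"
proof -
  let ?q = "take (Suc i) p @ drop (Suc j) p"
  have len: "length ?q = Suc i + (length p - Suc j)" using assms by auto
  have "E (?q!k) (?q!Suc k)" if "Suc k < length ?q" for k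
  proof (cases "k < i")
    case True
    have lt: "length (take (Suc i) p) = Suc i" using assms by simp
    have "?q!k = p!k" using True lt by (simp add: nth_append)
    moreover have "?q!Suc k = p!Suc k" using True lt by (simp add: nth_append)
    moreover have "Suc k < length p" using True assms by linarith
    ultimately show ?thesis by (rule walk_step[OF assms(1)])
  next
    case False
    show ?thesis
    proof (cases "k = i")
      case True
      have lt: "length (take (Suc i) p) = Suc i" using assms by simp
      have "?q!k = p!j" using True lt assms(4) by (simp add: nth_append)
      moreover have "?q!Suc k = p!Suc j" using True lt assms that len by (simp add: nth_append)
      moreover have "Suc j < length p" using True that len by linarith
      ultimately show ?thesis by (rule walk_step[OF assms(1)])
    next
      case False
      then have "k > i" using \<open>\<not> k < i\<close> by simp
      have kl: "Suc (k - Suc i) < length p - Suc j" using that len \<open>k > i\<close> by simp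
      have lt: "length (take (Suc i) p) = Suc i" using assms by simp
      have jl: "Suc j \<le> length p" using assms by simp
      have nk: "\<not> k < Suc i" "\<not> Suc k < Suc i" using \<open>k > i\<close> by simp_all
      have a: "?q!k = p!(Suc j + (k - Suc i))"
        using lt jl nk by (simp only: nth_append nth_drop if_False)
      have a2: "?q!Suc k = p!(Suc j + (Suc k - Suc i))"
        using lt jl nk by (simp only: nth_append nth_drop if_False)
      have b: "Suc j + (Suc k - Suc i) = Suc (Suc j + (k - Suc i))" using \<open>k > i\<close> by simp
      have "?q!k = p!(Suc j + (k - Suc i))" "?q!Suc k = p!Suc (Suc j + (k - Suc i))"
        using a a2 b by (simp only:)+
      moreover have "Suc (Suc j + (k - Suc i)) < length p" using kl by linarith
      ultimately show ?thesis by (rule walk_step[OF assms(1)])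
    qed
  qed
  moreover have "set ?q \<subseteq> set p" by (auto dest: in_set_takeD in_set_dropD)
  moreover have "last ?q = last p"
  proof (cases "Suc j < length p")
    case True then show ?thesis by auto
  next
    case False
    then have "j = length p - 1" using assms by auto
    then have q: "?q = take (Suc i) p" by simp
    have "take (Suc i) p \<noteq> []" using assms(3) by (cases p) auto
    then have "last (take (Suc i) p) = take (Suc i) p ! (length (take (Suc i) p) - 1)" by (rule last_conv_nth)
    also have "\<dots> = p ! i" using assms(2,3) by simp
    also have "\<dots> = p ! (length p - 1)" using assms(4) \<open>j = length p - 1\<close> by simp
    also have "\<dots> = last p" using last_conv_nth[of p] assms(3) by (cases p) auto
    finally show ?thesis using q by simp
  qed
  moreover have "?q \<noteq> []" using assms(3) by (cases p) auto
  ultimately have "walk D E ?q" using assms(1) unfolding walk_def by blast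
  moreover have "hd ?q = hd p" using assms by (simp add: hd_append)
  moreover have "length ?q < length p" using assms len by simp
  ultimately show ?thesis using \<open>last ?q = last p\<close> by blast
qed

lemma walk_induced:
  "walk D E p \<Longrightarrow> \<exists>q. walk D E q \<and> hd q = hd p \<and> last q = last p \<and> distinct q
     \<and> (\<forall>i j. i < length q \<and> j < length q \<and> Suc i < j \<longrightarrow> \<not> E (q ! i) (q ! j))"
proof (induction "length p" arbitrary: p rule: less_induct)
  case less
  show ?case
  proof (cases "distinct p \<and> (\<forall>i j. i < length p \<and> j < length p \<and> Suc i < j \<longrightarrow> \<not> E (p ! i) (p ! j))")
    case True
    then show ?thesis using less.prems by blast
  next
    case False
    show ?thesis
    proof (cases "distinct p")
      case False
      then obtain i j where "i < j" "j < length p" "p!i = p!j"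
        by (metis distinct_conv_nth linorder_neqE_nat)
      note r = walk_cut_eq[OF less.prems this]
      obtain q where "walk D E q \<and> hd q = hd (take (Suc i) p @ drop (Suc j) p) \<and> last q = last (take (Suc i) p @ drop (Suc j) p) \<and> distinct q
     \<and> (\<forall>i j. i < length q \<and> j < length q \<and> Suc i < j \<longrightarrow> \<not> E (q ! i) (q ! j))"
        using less.hyps[of "take (Suc i) p @ drop (Suc j) p"] r by blast
      then show ?thesis using r by metis
    next
      case True
      with \<open>\<not> (distinct p \<and> _)\<close> obtain i j where "Suc i < j" "j < length p" "E (p!i) (p!j)" by blast
      note r = walk_cut[OF less.prems this]
      obtain q where "walk D E q \<and> hd q = hd (take (Suc i) p @ drop j p) \<and> last q = last (take (Suc i) p @ drop j p) \<and> distinct q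
     \<and> (\<forall>i j. i < length q \<and> j < length q \<and> Suc i < j \<longrightarrow> \<not> E (q ! i) (q ! j))"
        using less.hyps[of "take (Suc i) p @ drop j p"] r by blast
      then show ?thesis using r by metis
    qed
  qed
qed

lemma walk_parity:
  assumes "walk (X \<union> Y) E p" "hd p \<in> X"
    and "\<And>u v. u \<in> X \<Longrightarrow> v \<in> X \<Longrightarrow> \<not> E u v"
    and "\<And>u v. u \<in> Y \<Longrightarrow> v \<in> Y \<Longrightarrow> \<not> E u v"
  shows "i < length p \<Longrightarrow> (p!i \<in> X \<longleftrightarrow> even i)"
proof (induction i)
  case 0
  then show ?case using assms by (auto simp: walk_def hd_conv_nth)
next
  case (Suc i)
  have e: "E (p!i) (p!Suc i)" using assms(1) Suc.prems by (auto simp: walk_def)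
  have "p!i \<in> set p" "p!Suc i \<in> set p" using Suc.prems by auto
  then have "p!i \<in> X \<union> Y" "p!Suc i \<in> X \<union> Y" using assms(1) by (auto simp: walk_def)
  then show ?case using Suc e assms(3,4) by auto
qed

lemma indep_S:
  assumes "simple_graph V E" "even_set V E S" "x \<in> S" "y \<in> S"
  shows "\<not> E x y"
proof
  assume e: "E x y"
  show False
  proof (cases "x = y")
    case True then show ?thesis using assms e by (auto simp: simple_graph_def)
  next
    case False
    then have ep: "even_pair V E x y" using assms by (auto simp: even_set_def)
    have xyV: "x \<in> V" "y \<in> V" using assms(2,3,4) unfolding even_set_def by auto
    have c1: "\<forall>i. Suc i < length [x, y] \<longrightarrow> E ([x, y] ! i) ([x, y] ! Suc i)"
    proof (intro allI impI)
      fix i assume "Suc i < length [x, y]"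
      then have "i = 0" by simp
      then show "E ([x, y] ! i) ([x, y] ! Suc i)" using e by simp
    qed
    have c2: "\<forall>i j. i < length [x, y] \<and> j < length [x, y] \<and> Suc i < j \<longrightarrow> \<not> E ([x, y] ! i) ([x, y] ! j)"
      using assms(1) by (simp add: simple_graph_def)
    have "induced_path V E [x, y]" unfolding induced_path_def
      using c1 c2 xyV False by simp
    moreover have "hd [x, y] = x" "last [x, y] = y" by simp_all
    ultimately have "even (length [x, y] - 1)" using ep unfolding even_pair_def by blast
    then show False by simp
  qed
qed

lemma alpha_props:
  assumes "simple_graph V E" "even_set V E S" "A \<subseteq> S"
  shows "\<exists>J. independent V E J \<and> J \<inter> S = A \<and> alpha_AS V E w A S = sum w J"
    and "\<And>I. independent V E I \<Longrightarrow> I \<inter> S = A \<Longrightarrow> sum w I \<le> alpha_AS V E w A S"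
proof -
  let ?M = "{sum w I | I. independent V E I \<and> I \<inter> S = A}"
  have fin: "finite ?M"
  proof -
    have "?M \<subseteq> sum w ` Pow V" unfolding independent_def by blast
    moreover have "finite V" using assms by (simp add: simple_graph_def)
    ultimately show ?thesis by (meson finite_Pow_iff finite_imageI finite_subset)
  qed
  have "A \<subseteq> V" using assms unfolding even_set_def by blast
  moreover have "\<forall>x\<in>A. \<forall>y\<in>A. \<not> E x y" using indep_S[OF assms(1,2)] assms(3) by blast
  ultimately have iA: "independent V E A" unfolding independent_def by (rule conjI)
  have AS: "A \<inter> S = A" using assms(3) by (rule Int_absorb2)
  have "sum w A \<in> ?M" using iA AS by blast
  then have ne: "?M \<noteq> {}" by auto
  have "Max ?M \<in> ?M" by (rule Max_in[OF fin ne])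
  then obtain J where "independent V E J \<and> J \<inter> S = A \<and> Max ?M = sum w J" by force
  then show "\<exists>J. independent V E J \<and> J \<inter> S = A \<and> alpha_AS V E w A S = sum w J"
    unfolding alpha_AS_def by blast
  show "\<And>I. independent V E I \<Longrightarrow> I \<inter> S = A \<Longrightarrow> sum w I \<le> alpha_AS V E w A S"
  proof -
    fix I assume "independent V E I" "I \<inter> S = A"
    then have "sum w I \<in> ?M" by blast
    then show "sum w I \<le> alpha_AS V E w A S" unfolding alpha_AS_def by (rule Max_ge[OF fin])
  qed
qed

theorem lemma2p2:
  fixes V :: "'a set" and E :: "'a \<Rightarrow> 'a \<Rightarrow> bool" and w :: "'a \<Rightarrow> real"
    and S :: "'a set" and f :: "'a set \<Rightarrow> real"
  assumes "simple_graph V E"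
    and "\<forall>v\<in>V. 0 \<le> w v \<and> w v \<le> 1"
    and "even_set V E S"
    and "\<forall>A. A \<subseteq> S \<longrightarrow> f A = - alpha_AS V E w A S"
  shows "\<forall>A B. A \<subseteq> S \<and> B \<subseteq> S \<longrightarrow> f A + f B \<ge> f (A \<union> B) + f (A \<inter> B)"
proof (intro allI impI)
  fix A B assume AB: "A \<subseteq> S \<and> B \<subseteq> S"
  have sg: "finite V" "\<And>x y. E x y \<Longrightarrow> E y x" using assms(1) by (auto simp: simple_graph_def)
  obtain JA where JA: "independent V E JA" "JA \<inter> S = A" "alpha_AS V E w A S = sum w JA"
    using alpha_props(1)[OF assms(1,3)] AB by blast
  obtain JB where JB: "independent V E JB" "JB \<inter> S = B" "alpha_AS V E w B S = sum w JB"
    using alpha_props(1)[OF assms(1,3)] AB by blast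
  define X where "X = JA - JB"
  define Y where "Y = JB - JA"
  define C where "C = {v. \<exists>p. walk (X \<union> Y) E p \<and> hd p \<in> A - B \<and> last p = v}"
  have CD: "C \<subseteq> X \<union> Y" unfolding C_def walk_def using last_in_set by blast
  have c2: "A - B \<subseteq> C"
  proof
    fix x assume x: "x \<in> A - B"
    then have "x \<in> X" using JA JB AB unfolding X_def by auto
    then have "walk (X \<union> Y) E [x]" by (simp add: walk_def)
    then show "x \<in> C" using x unfolding C_def by force
  qed
  have c4: "u \<in> C" if "v \<in> C" "u \<in> X \<union> Y" "E v u" for u v
  proof -
    from that obtain p where p: "walk (X \<union> Y) E p" "hd p \<in> A - B" "last p = v"
      unfolding C_def by auto
    have pn: "p \<noteq> []" using p by (simp add: walk_def)
    have lv: "p ! (length p - 1) = v" using p pn by (simp add: last_conv_nth)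
    have "E ((p @ [u]) ! k) ((p @ [u]) ! Suc k)" if k: "Suc k < length (p @ [u])" for k
    proof (cases "Suc k < length p")
      case True then show ?thesis using p(1) by (auto simp: walk_def nth_append)
    next
      case False
      then have "k = length p - 1" using k by auto
      then show ?thesis using lv \<open>E v u\<close> pn by (auto simp: nth_append)
    qed
    then have "walk (X \<union> Y) E (p @ [u])" using p that unfolding walk_def by auto
    moreover have "hd (p @ [u]) = hd p" using p by (auto simp: walk_def)
    ultimately show ?thesis using p unfolding C_def by force
  qed
  have XX: "\<not> E u v" if "u \<in> X" "v \<in> X" for u v using JA that unfolding X_def independent_def by auto
  have YY: "\<not> E u v" if "u \<in> Y" "v \<in> Y" for u v using JB that unfolding Y_def independent_def by auto
  have c3: "C \<inter> (B - A) = {}"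
  proof (rule ccontr)
    assume "C \<inter> (B - A) \<noteq> {}"
    then obtain y where y: "y \<in> C" "y \<in> B - A" by auto
    then obtain p where p: "walk (X \<union> Y) E p" "hd p \<in> A - B" "last p = y"
      unfolding C_def by auto
    obtain q where q: "walk (X \<union> Y) E q" "hd q = hd p" "last q = y" "distinct q"
      "\<forall>i j. i < length q \<and> j < length q \<and> Suc i < j \<longrightarrow> \<not> E (q ! i) (q ! j)"
      using walk_induced[OF p(1)] p by auto
    have hx: "hd q \<in> X" using q(2) p(2) JA JB AB unfolding X_def by auto
    have yY: "y \<in> Y" using y JA JB AB unfolding Y_def by auto
    have ne: "q \<noteq> []" using q by (simp add: walk_def)
    have "last q = q ! (length q - 1)" using ne by (simp add: last_conv_nth)
    moreover have "length q - 1 < length q" using ne by simp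
    ultimately have "\<not> even (length q - 1)"
      using walk_parity[OF q(1) hx XX YY, of "length q - 1"] yY q(3) unfolding X_def Y_def by auto
    moreover have "induced_path V E q"
      using q JA JB unfolding induced_path_def walk_def independent_def X_def Y_def by auto
    moreover have "even_pair V E (hd q) y"
    proof -
      have h: "hd q \<in> S" "y \<in> S" "hd q \<noteq> y" using p(2) q(2) y AB by auto
      then show ?thesis using assms(3) unfolding even_set_def by blast
    qed
    ultimately show False using q(3) unfolding even_pair_def by blast
  qed
  define I where "I = (JA \<inter> C) \<union> (JB - C)"
  define I' where "I' = (JB \<inter> C) \<union> (JA - C)"
  have iI: "independent V E I"
  proof -
    have "\<not> E u v" if "u \<in> JA \<inter> C" "v \<in> JB - C" for u v
    proof
      assume e: "E u v"
      show False
      proof (cases "v \<in> JA")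
        case True then show ?thesis using JA(1) that e unfolding independent_def by auto
      next
        case False
        then have "v \<in> X \<union> Y" using that unfolding Y_def by auto
        then show ?thesis using c4 that e by auto
      qed
    qed
    then show ?thesis using JA(1) JB(1) sg(2) unfolding I_def independent_def by blast
  qed
  have iI': "independent V E I'"
  proof -
    have "\<not> E u v" if "u \<in> JB \<inter> C" "v \<in> JA - C" for u v
    proof
      assume e: "E u v"
      show False
      proof (cases "v \<in> JB")
        case True then show ?thesis using JB(1) that e unfolding independent_def by auto
      next
        case False
        then have "v \<in> X \<union> Y" using that unfolding X_def by auto
        then show ?thesis using c4 that e by auto
      qed
    qed
    then show ?thesis using JA(1) JB(1) sg(2) unfolding I'_def independent_def by blast
  qed
  have SI: "I \<inter> S = A \<union> B"
    using JA(2) JB(2) c2 c3 CD AB unfolding I_def X_def Y_def by blast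
  have SI': "I' \<inter> S = A \<inter> B"
    using JA(2) JB(2) c2 c3 CD AB unfolding I'_def X_def Y_def by blast
  have finA: "finite JA" "finite JB" using JA JB sg(1) unfolding independent_def
    by (auto intro: finite_subset)
  have "sum w I = sum w (JA \<inter> C) + sum w (JB - C)"
    unfolding I_def using finA by (intro sum.union_disjoint) auto
  moreover have "sum w I' = sum w (JB \<inter> C) + sum w (JA - C)"
    unfolding I'_def using finA by (intro sum.union_disjoint) auto
  moreover have "sum w JA = sum w (JA \<inter> C) + sum w (JA - C)" using finA sum.Int_Diff by blast
  moreover have "sum w JB = sum w (JB \<inter> C) + sum w (JB - C)" using finA sum.Int_Diff by blast
  ultimately have eq: "sum w I + sum w I' = sum w JA + sum w JB" by linarith
  have "A \<union> B \<subseteq> S" "A \<inter> B \<subseteq> S" using AB by auto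
  have "sum w I \<le> alpha_AS V E w (A \<union> B) S"
    using alpha_props(2)[OF assms(1,3) \<open>A \<union> B \<subseteq> S\<close> iI SI] .
  moreover have "sum w I' \<le> alpha_AS V E w (A \<inter> B) S"
    using alpha_props(2)[OF assms(1,3) \<open>A \<inter> B \<subseteq> S\<close> iI' SI'] .
  ultimately show "f A + f B \<ge> f (A \<union> B) + f (A \<inter> B)"
    using assms(4) AB \<open>A \<union> B \<subseteq> S\<close> \<open>A \<inter> B \<subseteq> S\<close> JA(3) JB(3) eq by auto
qed

end
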